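(* Let $\sigma,\tau\in\mathcal T$, let $(w_n),(x_n)$ be defining sequences for $\sigma$ and $(y_n),(z_n)$ defining sequences for $\tau$. Then (i) for every $\alpha\in\mathbb Q$ the limits $\lim_n\overline{\alpha w_n}$ and $\lim_n\overline{\alpha x_n}$ exist in $\mathbb R^{\mathbb Q\times\Delta}$ and are equal; (ii) the iterated limits $\lim_n\lim_m\overline{w_n+y_m}$ and $\lim_n\lim_m\overline{x_n+z_m}$ exist and are equal.
   Context: Standing setting: $(X,\|\cdot\|)$ is a separable infinite-dimensional Banach space and $d$ is a translation-invariant ($d(x,y)=d(x-y,0)$) stable pseudometric on $X$ such that $\mathrm{Id}\colon(X,\|\cdot\|)\to(X,d)$ is a coarse equivalence ($\omega_{\mathrm{Id}}(t)=\sup\{d(x,y):\|x-y\|\le t\}<\infty$ for all $t$, $\rho_{\mathrm{Id}}(t)=\inf\{d(x,y):\|x-y\|\ge t\}\to\infty$). Stability: $\lim_{i,\mathcal U}\lim_{j,\mathcal V}d(x_i,y_j)=\lim_{j,\mathcal V}\lim_{i,\mathcal U}d(x_i,y_j)$ for bounded sequences and nonprincipal ultrafilters on $\mathbb N$. $\Delta$ is a countable $\|\cdot\|$-dense $\mathbb Q$-linear subspace of $X$; for $x\in\Delta$, $\bar x(\lambda,y)=d(\lambda x,y)$ for $(\lambda,y)\in\mathbb Q\times\Delta$. $\mathcal T$ is the closure of $\{\bar x:x\in\Delta\}$ in $\mathbb R^{\mathbb Q\times\Delta}$ (pointwise topology). A defining sequence for $\sigma\in\mathcal T$ is a sequence $(x_n)$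 in $\Delta$ with $\bar x_n\to\sigma$ pointwise. *)

theory Defs
  imports "HOL-Analysis.Analysis"
begin

definition pseudometric :: "('a \<Rightarrow> 'a \<Rightarrow> real) \<Rightarrow> bool" where
  "pseudometric d \<longleftrightarrow> (\<forall>x. d x x = 0) \<and> (\<forall>x y. d x y = d y x)
     \<and> (\<forall>x y z. d x z \<le> d x y + d y z)"

definition translation_invariant :: "('a::real_normed_vector \<Rightarrow> 'a \<Rightarrow> real) \<Rightarrow> bool" where
  "translation_invariant d \<longleftrightarrow> (\<forall>x y. d x y = d (x - y) 0)"

text \<open>Id : (X, norm) \<rightarrow> (X, d) is a coarse equivalence: the expansion modulus
  omega(t) = sup{d x y : norm(x-y) \<le> t} is finite for all t and the compression modulus
  rho(t) = inf{d x y : norm(x-y) \<ge> t} tends to infinity.\<close>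
definition id_coarse_equivalence :: "('a::real_normed_vector \<Rightarrow> 'a \<Rightarrow> real) \<Rightarrow> bool" where
  "id_coarse_equivalence d \<longleftrightarrow>
     (\<forall>t. \<exists>M. \<forall>x y. norm (x - y) \<le> t \<longrightarrow> d x y \<le> M) \<and>
     (\<forall>M. \<exists>t. \<forall>x y. norm (x - y) \<ge> t \<longrightarrow> d x y \<ge> M)"

definition nonprincipal_ultrafilter :: "nat filter \<Rightarrow> bool" where
  "nonprincipal_ultrafilter U \<longleftrightarrow> U \<noteq> bot
     \<and> (\<forall>P. eventually P U \<or> eventually (\<lambda>n. \<not> P n) U)
     \<and> (\<forall>k. eventually (\<lambda>n. n \<noteq> k) U)"

definition stable :: "('a::real_normed_vector \<Rightarrow> 'a \<Rightarrow> real) \<Rightarrow> bool" where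
  "stable d \<longleftrightarrow> (\<forall>(x::nat \<Rightarrow> 'a) (y::nat \<Rightarrow> 'a) U V.
     bounded (range x) \<longrightarrow> bounded (range y) \<longrightarrow>
     nonprincipal_ultrafilter U \<longrightarrow> nonprincipal_ultrafilter V \<longrightarrow>
     Lim U (\<lambda>i. Lim V (\<lambda>j. d (x i) (y j))) = Lim V (\<lambda>j. Lim U (\<lambda>i. d (x i) (y j))))"

definition rat_linear_subspace :: "'a::real_vector set \<Rightarrow> bool" where
  "rat_linear_subspace D \<longleftrightarrow> 0 \<in> D \<and> (\<forall>x\<in>D. \<forall>y\<in>D. x + y \<in> D)
     \<and> (\<forall>q::rat. \<forall>x\<in>D. of_rat q *\<^sub>R x \<in> D)"

text \<open>The space R^(Q x Delta) with the product (pointwise) topology; elements are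
  extensional functions on UNIV x Delta.\<close>
definition PT :: "'a set \<Rightarrow> (rat \<times> 'a \<Rightarrow> real) topology" where
  "PT D = product_topology (\<lambda>_. euclideanreal) (UNIV \<times> D)"

definition xbar :: "('a::real_vector \<Rightarrow> 'a \<Rightarrow> real) \<Rightarrow> 'a set \<Rightarrow> 'a \<Rightarrow> (rat \<times> 'a \<Rightarrow> real)" where
  "xbar d D x = restrict (\<lambda>(q, y). d (of_rat q *\<^sub>R x) y) (UNIV \<times> D)"

definition Tspace :: "('a::real_vector \<Rightarrow> 'a \<Rightarrow> real) \<Rightarrow> 'a set \<Rightarrow> (rat \<times> 'a \<Rightarrow> real) set" where
  "Tspace d D = (PT D) closure_of (xbar d D ` D)"

definition defining_sequence ::
  "('a::real_vector \<Rightarrow> 'a \<Rightarrow> real) \<Rightarrow> 'a set \<Rightarrow> (rat \<times> 'a \<Rightarrow> real) \<Rightarrow> (nat \<Rightarrow> 'a) \<Rightarrow> bool" where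
  "defining_sequence d D \<sigma> x \<longleftrightarrow> (\<forall>n. x n \<in> D) \<and>
     limitin (PT D) (\<lambda>n. xbar d D (x n)) \<sigma> sequentially"

end

theory Submission
  imports Defs
begin

definition ultra :: "'a filter \<Rightarrow> bool" where
  "ultra U \<longleftrightarrow> U \<noteq> bot \<and> (\<forall>P. eventually P U \<or> eventually (\<lambda>x. \<not> P x) U)"

lemma max_filter_ultra:
  assumes "F \<noteq> bot"
  assumes max: "\<And>G. G \<noteq> bot \<Longrightarrow> G \<le> F \<Longrightarrow> F = G"
  shows "ultra F"
  unfolding ultra_def
proof (intro conjI allI assms(1))
  fix P
  show "eventually P F \<or> (\<forall>\<^sub>Fx in F. \<not> P x)"
  proof (rule disjCI)
    assume "\<not> (\<forall>\<^sub>Fx in F. \<not> P x)"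
    then have "inf F (principal {x. P x}) \<noteq> bot"
      by (simp add: trivial_limit_def eventually_inf_principal not_eventually)
    then have F: "F = inf F (principal {x. P x})"
      by (rule max) simp
    show "eventually P F"
      by (subst F) (simp add: eventually_inf_principal)
  qed
qed

lemma ex_ultra:
  fixes F :: "'a filter"
  assumes F: "F \<noteq> bot"
  shows "\<exists>U\<le>F. ultra U"
proof -
  let ?X = "{G. G \<noteq> bot \<and> G \<le> F}"
  let ?R = "{(b, a). a \<noteq> bot \<and> a \<le> b \<and> b \<le> F}"
  have bot_notin_R: "c \<in> Chains ?R \<Longrightarrow> bot \<notin> c" for c
    by (auto simp: Chains_def)
  have [simp]: "Field ?R = ?X"
    by (auto simp: Field_def bot_unique)
  have "\<exists>m\<in>Field ?R. \<forall>a\<in>Field ?R. (m, a) \<in> ?R \<longrightarrow> a = m" (is "\<exists>m\<in>?A. ?B m")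
  proof (rule Zorns_po_lemma)
    show "Partial_order ?R"
      by (auto simp: partial_order_on_def preorder_on_def
          antisym_def refl_on_def trans_def Field_def bot_unique)
    show "\<exists>u\<in>Field ?R. \<forall>a\<in>C. (a, u) \<in> ?R" if C: "C \<in> Chains ?R" for C
    proof (simp, intro exI conjI ballI)
      have Inf_C: "Inf C \<noteq> bot" "Inf C \<le> F" if "C \<noteq> {}"
      proof -
        from C that have "Inf C = bot \<longleftrightarrow> (\<exists>x\<in>C. x = bot)"
          unfolding trivial_limit_def by (intro eventually_Inf_base) (auto simp: Chains_def)
        with C show "Inf C \<noteq> bot"
          by (simp add: bot_notin_R)
        from that obtain x where "x \<in> C" by auto
        with C show "Inf C \<le> F"
          by (auto intro!: Inf_lower2[of x] simp: Chains_def)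
      qed
      then have [simp]: "inf F (Inf C) = (if C = {} then F else Inf C)"
        using C by (auto simp add: inf_absorb2)
      from C show "inf F (Inf C) \<noteq> bot"
        by (simp add: F Inf_C)
      from C show "inf F (Inf C) \<le> F"
        by (simp add: Chains_def Inf_C F)
      with C show "inf F (Inf C) \<le> x" "x \<le> F" if "x \<in> C" for x
        using that  by (auto intro: Inf_lower simp: Chains_def)
    qed
  qed
  then obtain U where U: "U \<in> ?A" "?B U" ..
  show ?thesis
  proof
    from U show "U \<le> F \<and> ultra U"
      by (auto intro!: max_filter_ultra)
  qed
qed

lemma nonprincipal_le_seq:
  assumes "nonprincipal_ultrafilter U" shows "U \<le> sequentially"
proof (rule filter_leI)
  fix P assume "eventually P sequentially"
  then obtain N where N: "\<And>n. n \<ge> N \<Longrightarrow> P n" by (auto simp: eventually_sequentially)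
  have "eventually (\<lambda>n. \<forall>k\<in>{..<N}. n \<noteq> k) U"
    using assms by (intro eventually_ball_finite) (auto simp: nonprincipal_ultrafilter_def)
  then show "eventually P U"
    by (rule eventually_mono) (metis N lessThan_iff not_le)
qed

lemma ultra_nonprincipal:
  assumes "ultra U" "U \<le> sequentially" shows "nonprincipal_ultrafilter U"
  unfolding nonprincipal_ultrafilter_def
proof (intro conjI allI)
  show "U \<noteq> bot" using assms by (simp add: ultra_def)
  fix P show "eventually P U \<or> (\<forall>\<^sub>F n in U. \<not> P n)" using assms by (simp add: ultra_def)
next
  fix k :: nat
  have "eventually (\<lambda>n. n \<noteq> k) sequentially"
    by (rule eventually_sequentiallyI[of "Suc k"]) auto
  then show "eventually (\<lambda>n. n \<noteq> k) U" using assms(2) filter_leD by blast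
qed

lemma ultra_bounded_conv:
  fixes a :: "'b \<Rightarrow> real"
  assumes U: "ultra U" and B: "\<And>n. \<bar>a n\<bar> \<le> B"
  shows "\<exists>c. (a \<longlongrightarrow> c) U"
proof -
  let ?F = "filtermap a U"
  have ne: "?F \<noteq> bot" using U by (simp add: ultra_def filtermap_bot_iff)
  have ev: "eventually (\<lambda>x. x \<in> cball 0 B) ?F"
    using B by (auto simp: eventually_filtermap intro!: always_eventually)
  obtain c where c: "c \<in> cball 0 B" "inf (nhds c) ?F \<noteq> bot"
    using compact_filter[THEN iffD1, rule_format, OF compact_cball ne ev] by blast
  have "?F \<le> nhds c"
  proof (rule filter_leI)
    fix P assume P: "eventually P (nhds c)"
    show "eventually P ?F"
    proof (rule ccontr)
      assume "\<not> eventually P ?F"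
      then have "eventually (\<lambda>x. \<not> P x) ?F"
        using U unfolding ultra_def eventually_filtermap by auto
      then have "eventually (\<lambda>x. P x \<and> \<not> P x) (inf (nhds c) ?F)"
        using P eventually_inf by blast
      then show False using c(2) by (simp add: trivial_limit_def)
    qed
  qed
  then show ?thesis unfolding filterlim_def by blast
qed

lemma key_double:
  fixes f :: "nat \<Rightarrow> nat \<Rightarrow> real"
  assumes rows: "\<And>n. (\<lambda>m. f n m) \<longlonglongrightarrow> a n"
    and cols: "\<And>m. (\<lambda>n. f n m) \<longlonglongrightarrow> b m"
    and comm: "\<And>U V. nonprincipal_ultrafilter U \<Longrightarrow> nonprincipal_ultrafilter V \<Longrightarrow>
        Lim U (\<lambda>i. Lim V (\<lambda>j. f i j)) = Lim V (\<lambda>j. Lim U (\<lambda>i. f i j))"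
    and bnd: "\<And>i j. \<bar>f i j\<bar> \<le> B"
    and V: "nonprincipal_ultrafilter V"
  shows "a \<longlonglongrightarrow> Lim V b"
proof -
  have nb: "W \<noteq> bot" if "nonprincipal_ultrafilter W" for W
    using that by (simp add: nonprincipal_ultrafilter_def)
  have abnd: "\<bar>a n\<bar> \<le> B" for n
  proof -
    have "(\<lambda>m. \<bar>f n m\<bar>) \<longlonglongrightarrow> \<bar>a n\<bar>" using rows by (intro tendsto_rabs)
    then show ?thesis using bnd by (intro LIMSEQ_le_const2) auto
  qed
  have LU: "Lim U a = Lim V b" if U: "nonprincipal_ultrafilter U" for U
  proof -
    have "Lim V (\<lambda>j. f i j) = a i" for i
      by (rule tendsto_Lim[OF nb[OF V]]) (rule tendsto_mono[OF nonprincipal_le_seq[OF V] rows])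
    moreover have "Lim U (\<lambda>i. f i j) = b j" for j
      by (rule tendsto_Lim[OF nb[OF U]]) (rule tendsto_mono[OF nonprincipal_le_seq[OF U] cols])
    ultimately show ?thesis using comm[OF U V] by simp
  qed
  define c where "c = Lim V b"
  show ?thesis unfolding c_def[symmetric]
  proof (rule ccontr)
    assume "\<not> a \<longlonglongrightarrow> c"
    then obtain r where r: "r > 0" "\<not> eventually (\<lambda>n. dist (a n) c < r) sequentially"
      unfolding tendsto_iff by blast
    let ?F = "inf sequentially (principal {n. \<not> dist (a n) c < r})"
    have "?F \<noteq> bot"
      using r(2) by (simp add: trivial_limit_def eventually_inf_principal)
    then obtain U where U: "U \<le> ?F" "ultra U" using ex_ultra by blast
    have Useq: "U \<le> sequentially" using U(1) by (meson inf.boundedE)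
    have NU: "nonprincipal_ultrafilter U" by (rule ultra_nonprincipal[OF U(2) Useq])
    obtain c' where c': "(a \<longlongrightarrow> c') U" using ultra_bounded_conv[OF U(2), of a B] abnd by blast
    have "c' = Lim U a" using tendsto_Lim[OF nb[OF NU] c'] by simp
    also have "\<dots> = c" using LU[OF NU] c_def by simp
    finally have "(a \<longlongrightarrow> c) U" using c' by simp
    then have e1: "eventually (\<lambda>n. dist (a n) c < r) U" using r(1) tendstoD by blast
    have "eventually (\<lambda>n. \<not> dist (a n) c < r) ?F" by (simp add: eventually_inf_principal)
    then have e2: "eventually (\<lambda>n. \<not> dist (a n) c < r) U" using U(1) filter_leD by blast
    have "eventually (\<lambda>n. False) U" using eventually_conj[OF e1 e2] by (rule eventually_mono) simp
    then show False using nb[OF NU] by (simp add: trivial_limit_def)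
  qed
qed

lemma xbar_app: "u \<in> D \<Longrightarrow> xbar d D v (q, u) = d (of_rat q *\<^sub>R v) u"
  by (simp add: xbar_def)

lemma xbar_ext: "xbar d D v \<in> extensional (UNIV \<times> D)"
  by (simp add: xbar_def)

lemma defseq_pt:
  assumes "defining_sequence d D \<sigma> w"
  shows "\<sigma> \<in> extensional (UNIV \<times> D)" "\<And>n. w n \<in> D"
    "\<And>q u. u \<in> D \<Longrightarrow> (\<lambda>n. d (of_rat q *\<^sub>R w n) u) \<longlonglongrightarrow> \<sigma> (q, u)"
proof -
  have L: "limitin (PT D) (\<lambda>n. xbar d D (w n)) \<sigma> sequentially" and W: "\<And>n. w n \<in> D"
    using assms by (auto simp: defining_sequence_def)
  note C = L[unfolded PT_def limitin_componentwise]
  show "\<sigma> \<in> extensional (UNIV \<times> D)" using C by blast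
  show "\<And>n. w n \<in> D" by (rule W)
  fix q u assume u: "u \<in> D"
  have "limitin euclideanreal (\<lambda>c. xbar d D (w c) (q, u)) (\<sigma> (q, u)) sequentially"
    using C u by blast
  then show "(\<lambda>n. d (of_rat q *\<^sub>R w n) u) \<longlonglongrightarrow> \<sigma> (q, u)"
    using u by (simp add: xbar_app)
qed

lemma limitin_PTI:
  assumes "l \<in> extensional (UNIV \<times> D)"
    and "\<And>q u. u \<in> D \<Longrightarrow> (\<lambda>n. g n (q, u)) \<longlonglongrightarrow> l (q, u)"
    and "\<And>n. g n \<in> extensional (UNIV \<times> D)"
  shows "limitin (PT D) g l sequentially"
  unfolding PT_def limitin_componentwise
  using assms by (auto simp: PiE_def)

lemma defseq_bound:
  assumes ds: "defining_sequence d D \<sigma> w" and D0: "0 \<in> D"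
    and ce: "id_coarse_equivalence d"
  shows "\<exists>M. \<forall>n. norm (w n) \<le> M"
proof -
  have "(\<lambda>n. d (of_rat 1 *\<^sub>R w n) 0) \<longlonglongrightarrow> \<sigma> (1, 0)"
    by (rule defseq_pt(3)[OF ds D0])
  then have "Bseq (\<lambda>n. d (w n) 0)" by (simp add: convergent_imp_Bseq convergentI)
  then obtain K where K: "\<And>n. norm (d (w n) 0) \<le> K" by (auto simp: Bseq_def)
  obtain t where t: "\<And>x y. norm (x - y) \<ge> t \<Longrightarrow> d x y \<ge> K + 1"
    using ce unfolding id_coarse_equivalence_def by blast
  have "norm (w n) \<le> t" for n
  proof (rule ccontr)
    assume "\<not> norm (w n) \<le> t"
    then have "d (w n) 0 \<ge> K + 1" using t[of "w n" 0] by simp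
    then show False using K[of n] by simp
  qed
  then show ?thesis by blast
qed

lemma pm_nonneg: "pseudometric d \<Longrightarrow> d x y \<ge> 0"
  unfolding pseudometric_def by (metis add_le_same_cancel1 add_mono_thms_linordered_semiring(1)
        linorder_not_le mult_2 not_le order_trans zero_le_mult_iff)

lemma D_diff:
  assumes "rat_linear_subspace D" "u \<in> D" "v \<in> D"
  shows "u - of_rat q *\<^sub>R v \<in> D"
proof -
  have "of_rat (- q) *\<^sub>R v \<in> D" using assms unfolding rat_linear_subspace_def by blast
  then have "u + of_rat (- q) *\<^sub>R v \<in> D" using assms unfolding rat_linear_subspace_def by blast
  then show ?thesis by (simp add: of_rat_minus)
qed

lemma ti_swap:
  assumes "translation_invariant d"
  shows "d (c *\<^sub>R (p + r)) u = d (c *\<^sub>R r) (u - c *\<^sub>R p)"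
    "d (c *\<^sub>R p) (u - c *\<^sub>R r) = d (c *\<^sub>R (p + r)) u"
proof -
  have e1: "c *\<^sub>R r - (u - c *\<^sub>R p) = c *\<^sub>R (p + r) - u" by (simp add: algebra_simps)
  have e2: "c *\<^sub>R p - (u - c *\<^sub>R r) = c *\<^sub>R (p + r) - u" by (simp add: algebra_simps)
  show "d (c *\<^sub>R (p + r)) u = d (c *\<^sub>R r) (u - c *\<^sub>R p)"
    using assms unfolding translation_invariant_def by (metis e1)
  show "d (c *\<^sub>R p) (u - c *\<^sub>R r) = d (c *\<^sub>R (p + r)) u"
    using assms unfolding translation_invariant_def by (metis e2)
qed

lemma row_lim:
  fixes d :: "'a::real_normed_vector \<Rightarrow> 'a \<Rightarrow> real"
  assumes ti: "translation_invariant d" and Dsub: "rat_linear_subspace D"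
    and dp: "defining_sequence d D \<sigma> p" and dr: "defining_sequence d D \<tau> r" and u: "u \<in> D"
  shows "(\<lambda>m. d (of_rat q *\<^sub>R (p n + r m)) u) \<longlonglongrightarrow> \<tau> (q, u - of_rat q *\<^sub>R p n)"
proof -
  have "u - of_rat q *\<^sub>R p n \<in> D" by (rule D_diff[OF Dsub u defseq_pt(2)[OF dp]])
  from defseq_pt(3)[OF dr this] show ?thesis by (simp add: ti_swap(1)[OF ti])
qed

lemma pair_lim:
  fixes d :: "'a::real_normed_vector \<Rightarrow> 'a \<Rightarrow> real"
  assumes pm: "pseudometric d" and ti: "translation_invariant d" and stab: "stable d"
    and ce: "id_coarse_equivalence d" and Dsub: "rat_linear_subspace D"
    and dp: "defining_sequence d D \<sigma> p" and dr: "defining_sequence d D \<tau> r" and u: "u \<in> D"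
    and V: "nonprincipal_ultrafilter V"
  shows "(\<lambda>i. \<tau> (q, u - of_rat q *\<^sub>R p i)) \<longlonglongrightarrow> Lim V (\<lambda>j. \<sigma> (q, u - of_rat q *\<^sub>R r j))"
proof -
  define c :: real where "c = of_rat q"
  have D0: "0 \<in> D" using Dsub by (simp add: rat_linear_subspace_def)
  obtain Mp where Mp: "\<And>n. norm (p n) \<le> Mp" using defseq_bound[OF dp D0 ce] by blast
  obtain Mr where Mr: "\<And>n. norm (r n) \<le> Mr" using defseq_bound[OF dr D0 ce] by blast
  define X where "X i = c *\<^sub>R p i" for i
  define Y where "Y j = u - c *\<^sub>R r j" for j
  have nX: "norm (X i) \<le> \<bar>c\<bar> * Mp" for i
    unfolding X_def using Mp[of i] by (simp add: mult_left_mono)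
  have nY: "norm (Y j) \<le> norm u + \<bar>c\<bar> * Mr" for j
  proof -
    have "norm (Y j) \<le> norm u + norm (c *\<^sub>R r j)" unfolding Y_def by (rule norm_triangle_ineq4)
    also have "\<dots> \<le> norm u + \<bar>c\<bar> * Mr" using Mr[of j] by (simp add: mult_left_mono)
    finally show ?thesis .
  qed
  have bX: "bounded (range X)" using nX unfolding bounded_iff by blast
  have bY: "bounded (range Y)" using nY unfolding bounded_iff by blast
  obtain M where M: "\<And>x y. norm (x - y) \<le> \<bar>c\<bar> * Mp + (norm u + \<bar>c\<bar> * Mr) \<Longrightarrow> d x y \<le> M"
    using ce unfolding id_coarse_equivalence_def by blast
  have bnd: "\<bar>d (X i) (Y j)\<bar> \<le> M" for i j
  proof -
    have "norm (X i - Y j) \<le> norm (X i) + norm (Y j)" by (rule norm_triangle_ineq4)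
    also have "\<dots> \<le> \<bar>c\<bar> * Mp + (norm u + \<bar>c\<bar> * Mr)" using nX nY by (intro add_mono)
    finally have "d (X i) (Y j) \<le> M" by (rule M)
    then show ?thesis using pm_nonneg[OF pm] by simp
  qed
  have rows: "(\<lambda>j. d (X i) (Y j)) \<longlonglongrightarrow> \<tau> (q, u - of_rat q *\<^sub>R p i)" for i
    using row_lim[OF ti Dsub dp dr u, of q i] unfolding X_def Y_def c_def
    by (simp add: ti_swap(2)[OF ti])
  have cols: "(\<lambda>i. d (X i) (Y j)) \<longlonglongrightarrow> \<sigma> (q, u - of_rat q *\<^sub>R r j)" for j
  proof -
    have "u - of_rat q *\<^sub>R r j \<in> D" by (rule D_diff[OF Dsub u defseq_pt(2)[OF dr]])
    from defseq_pt(3)[OF dp this] show ?thesis unfolding X_def Y_def c_def .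
  qed
  have comm: "Lim U (\<lambda>i. Lim W (\<lambda>j. d (X i) (Y j))) = Lim W (\<lambda>j. Lim U (\<lambda>i. d (X i) (Y j)))"
    if "nonprincipal_ultrafilter U" "nonprincipal_ultrafilter W" for U W
    using stab bX bY that unfolding stable_def by blast
  show ?thesis
    by (rule key_double[where f = "\<lambda>i j. d (X i) (Y j)", OF rows cols comm bnd V])
qed

theorem lemma4p3:
  fixes d :: "'a::banach \<Rightarrow> 'a \<Rightarrow> real"
    and D :: "'a set"
    and \<sigma> \<tau> :: "rat \<times> 'a \<Rightarrow> real"
    and w x y z :: "nat \<Rightarrow> 'a"
  assumes separable: "\<exists>S::'a set. countable S \<and> closure S = UNIV"
    and inf_dim: "\<not> (\<exists>S::'a set. finite S \<and> span S = UNIV)"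
    and pm: "pseudometric d"
    and ti: "translation_invariant d"
    and stab: "stable d"
    and ce: "id_coarse_equivalence d"
    and D_count: "countable D"
    and D_dense: "closure D = UNIV"
    and D_sub: "rat_linear_subspace D"
    and \<sigma>T: "\<sigma> \<in> Tspace d D"
    and \<tau>T: "\<tau> \<in> Tspace d D"
    and w_def: "defining_sequence d D \<sigma> w"
    and x_def: "defining_sequence d D \<sigma> x"
    and y_def: "defining_sequence d D \<tau> y"
    and z_def: "defining_sequence d D \<tau> z"
  shows "(\<forall>\<alpha>::rat. \<exists>L.
            limitin (PT D) (\<lambda>n. xbar d D (of_rat \<alpha> *\<^sub>R w n)) L sequentially \<and>
            limitin (PT D) (\<lambda>n. xbar d D (of_rat \<alpha> *\<^sub>R x n)) L sequentially)
       \<and> (\<exists>L.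
            (\<exists>G. (\<forall>n. limitin (PT D) (\<lambda>m. xbar d D (w n + y m)) (G n) sequentially)
                 \<and> limitin (PT D) G L sequentially) \<and>
            (\<exists>H. (\<forall>n. limitin (PT D) (\<lambda>m. xbar d D (x n + z m)) (H n) sequentially)
                 \<and> limitin (PT D) H L sequentially))"
proof -
  have D0: "0 \<in> D" using D_sub by (simp add: rat_linear_subspace_def)
  obtain V where V0: "V \<le> sequentially" "ultra V"
    using ex_ultra[of "sequentially :: nat filter"] by auto
  have V: "nonprincipal_ultrafilter V" by (rule ultra_nonprincipal[OF V0(2,1)])
  have part1: "\<exists>L. limitin (PT D) (\<lambda>n. xbar d D (of_rat \<alpha> *\<^sub>R w n)) L sequentially \<and>
            limitin (PT D) (\<lambda>n. xbar d D (of_rat \<alpha> *\<^sub>R x n)) L sequentially" for \<alpha> :: rat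
  proof -
    define L where "L = restrict (\<lambda>(q, u). \<sigma> (q * \<alpha>, u)) (UNIV \<times> D)"
    have "limitin (PT D) (\<lambda>n. xbar d D (of_rat \<alpha> *\<^sub>R p n)) L sequentially"
      if dp: "defining_sequence d D \<sigma> p" for p
    proof (rule limitin_PTI)
      show "L \<in> extensional (UNIV \<times> D)" by (simp add: L_def)
      show "xbar d D (of_rat \<alpha> *\<^sub>R p n) \<in> extensional (UNIV \<times> D)" for n by (rule xbar_ext)
      fix q u assume u: "u \<in> D"
      from defseq_pt(3)[OF dp u, of "q * \<alpha>"]
      show "(\<lambda>n. xbar d D (of_rat \<alpha> *\<^sub>R p n) (q, u)) \<longlonglongrightarrow> L (q, u)"
        using u by (simp add: xbar_app L_def of_rat_mult)
    qed
    then show ?thesis using w_def x_def by blast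
  qed
  define L where "L = restrict (\<lambda>(q, u). Lim V (\<lambda>j. \<sigma> (q, u - of_rat q *\<^sub>R y j))) (UNIV \<times> D)"
  have part2: "\<exists>G. (\<forall>n. limitin (PT D) (\<lambda>m. xbar d D (p n + r m)) (G n) sequentially)
                 \<and> limitin (PT D) G L sequentially"
    if dp: "defining_sequence d D \<sigma> p" and dr: "defining_sequence d D \<tau> r"
      and key: "\<And>q u. u \<in> D \<Longrightarrow> (\<lambda>i. \<tau> (q, u - of_rat q *\<^sub>R p i)) \<longlonglongrightarrow> L (q, u)" for p r
  proof (intro exI conjI allI)
    define G where "G n = restrict (\<lambda>(q, u). \<tau> (q, u - of_rat q *\<^sub>R p n)) (UNIV \<times> D)" for n
    show "limitin (PT D) (\<lambda>m. xbar d D (p n + r m)) (G n) sequentially" for n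
    proof (rule limitin_PTI)
      show "G n \<in> extensional (UNIV \<times> D)" by (simp add: G_def)
      show "xbar d D (p n + r m) \<in> extensional (UNIV \<times> D)" for m by (rule xbar_ext)
      fix q u assume u: "u \<in> D"
      from row_lim[OF ti D_sub dp dr u, of q n]
      show "(\<lambda>m. xbar d D (p n + r m) (q, u)) \<longlonglongrightarrow> G n (q, u)"
        using u by (simp add: xbar_app G_def)
    qed
    show "limitin (PT D) G L sequentially"
    proof (rule limitin_PTI)
      show "L \<in> extensional (UNIV \<times> D)" by (simp add: L_def)
      show "G n \<in> extensional (UNIV \<times> D)" for n by (simp add: G_def)
      fix q u assume u: "u \<in> D"
      from key[OF u, of q] show "(\<lambda>n. G n (q, u)) \<longlonglongrightarrow> L (q, u)"
        using u by (simp add: G_def)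
    qed
  qed
  have k1: "(\<lambda>i. \<tau> (q, u - of_rat q *\<^sub>R w i)) \<longlonglongrightarrow> L (q, u)" if "u \<in> D" for q u
    using pair_lim[OF pm ti stab ce D_sub w_def y_def that V, of q] that by (simp add: L_def)
  have k2: "(\<lambda>i. \<tau> (q, u - of_rat q *\<^sub>R x i)) \<longlonglongrightarrow> L (q, u)" if "u \<in> D" for q u
    using pair_lim[OF pm ti stab ce D_sub x_def y_def that V, of q] that by (simp add: L_def)
  show ?thesis
    using part1 part2[OF w_def y_def k1] part2[OF x_def z_def k2] by blast
qed

end
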